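(* Let $n\ge 2$ be an integer and $A\subseteq L_n$. The space $(X_n,\tau(A))$ is locally compact if and only if $A=L_n$ (i.e. $\tau(A)$ is the Euclidean topology on $X_n$).
   Context: For $\overline{x},\overline{a}\in\mathbb R^n$ let $|\overline{x}-\overline{a}|$ be the Euclidean distance and $B(\overline{a},\epsilon)=\{\overline{x}\in\mathbb R^n:|\overline{x}-\overline{a}|<\epsilon\}$. Let $P_n=\{\overline{x}\in\mathbb R^n: x_n>0\}$, $L_n=\{\overline{x}\in\mathbb R^n: x_n=0\}$, $X_n=P_n\cup L_n$. For $\overline{a}\in L_n$ and $\epsilon>0$ put $\overline{a(\epsilon)}=(a_1,\dots,a_{n-1},\epsilon)$ and $\tilde B(\overline{a},\epsilon)=\{\overline{a}\}\cup B(\overline{a(\epsilon)},\epsilon)$. For $A\subseteq L_n$, the topology $\tau(A)$ on $X_n$ is generated by the local bases: at $\overline{a}\in P_n$, the sets $B(\overline{a},\epsilon)$ with $0<\epsilon<a_n$; at $\overline{a}\in A$, the sets $B(\overline{a},\epsilon)\cap X_n$ with $\epsilon>0$; at $\overline{a}\in L_n\setminus A$, the sets $\tilde B(\overline{a},\epsilon)$ with $\epsilon>0$. Note $\tau(L_n)$ is the Euclidean topology on $X_n$. *)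

theory Defs
  imports "HOL-Analysis.Analysis"
begin

text \<open>Euclidean n-space R^n is modelled as 'a \<times> real, where 'a is a Euclidean space
  of dimension n-1 (\<ge> 1 automatically, so n \<ge> 2); the last coordinate x_n is snd.
  The product metric on 'a \<times> real is the Euclidean one.\<close>

definition Pn :: "('a::euclidean_space \<times> real) set" where
  "Pn = {x. snd x > 0}"

definition Ln :: "('a::euclidean_space \<times> real) set" where
  "Ln = {x. snd x = 0}"

definition Xn :: "('a::euclidean_space \<times> real) set" where
  "Xn = Pn \<union> Ln"

definition shift_pt :: "'a::euclidean_space \<times> real \<Rightarrow> real \<Rightarrow> 'a \<times> real" where
  "shift_pt a e = (fst a, e)"

definition tball :: "'a::euclidean_space \<times> real \<Rightarrow> real \<Rightarrow> ('a \<times> real) set" where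
  "tball a e = insert a (ball (shift_pt a e) e)"

definition tau :: "('a::euclidean_space \<times> real) set \<Rightarrow> ('a \<times> real) topology" where
  "tau A = topology (\<lambda>U. U \<subseteq> Xn \<and>
     (\<forall>p\<in>U.
        (p \<in> Pn \<longrightarrow> (\<exists>e. 0 < e \<and> e < snd p \<and> ball p e \<subseteq> U)) \<and>
        (p \<in> A \<longrightarrow> (\<exists>e>0. ball p e \<inter> Xn \<subseteq> U)) \<and>
        (p \<in> Ln - A \<longrightarrow> (\<exists>e>0. tball p e \<subseteq> U))))"

end

theory Submission
  imports Defs
begin

definition tauP :: "('a::euclidean_space \<times> real) set \<Rightarrow> ('a \<times> real) set \<Rightarrow> bool" where
  "tauP A = (\<lambda>U. U \<subseteq> Xn \<and>
     (\<forall>p\<in>U.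
        (p \<in> Pn \<longrightarrow> (\<exists>e. 0 < e \<and> e < snd p \<and> ball p e \<subseteq> U)) \<and>
        (p \<in> A \<longrightarrow> (\<exists>e>0. ball p e \<inter> Xn \<subseteq> U)) \<and>
        (p \<in> Ln - A \<longrightarrow> (\<exists>e>0. tball p e \<subseteq> U))))"

lemma tball_mono:
  fixes a :: "'a::euclidean_space \<times> real"
  assumes "0 < e'" "e' \<le> e"
  shows "tball a e' \<subseteq> tball a e"
proof
  fix x assume "x \<in> tball a e'"
  then consider "x = a" | "dist (shift_pt a e') x < e'" by (auto simp: tball_def)
  then show "x \<in> tball a e"
  proof cases
    case 2
    have "dist (shift_pt a e) (shift_pt a e') = e - e'"
      using assms by (simp add: shift_pt_def dist_Pair_Pair dist_real_def)
    then have "dist (shift_pt a e) x < e"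
      using 2 dist_triangle[of "shift_pt a e" x "shift_pt a e'"] by linarith
    then show ?thesis by (simp add: tball_def)
  qed (simp add: tball_def)
qed

lemma ball_shift_pos:
  fixes a :: "'a::euclidean_space \<times> real"
  assumes "x \<in> ball (shift_pt a e) e"
  shows "snd x > 0"
proof -
  have "dist (snd (shift_pt a e)) (snd x) \<le> dist (shift_pt a e) x"
    by (metis dist_snd_le)
  then show ?thesis using assms by (auto simp: shift_pt_def dist_real_def)
qed

lemma tball_sub_ball:
  fixes a :: "'a::euclidean_space \<times> real"
  assumes "0 < e" "a \<in> Ln"
  shows "tball a e \<subseteq> ball a (2*e)"
proof
  fix x assume "x \<in> tball a e"
  then consider "x = a" | "dist (shift_pt a e) x < e" by (auto simp: tball_def)
  then show "x \<in> ball a (2*e)"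
  proof cases
    case 2
    have "dist a (shift_pt a e) = e"
      using assms by (cases a) (simp add: shift_pt_def dist_Pair_Pair dist_real_def Ln_def)
    then show ?thesis using 2 dist_triangle[of a x "shift_pt a e"] by simp
  qed (use assms in simp)
qed

lemma tball_sub_Xn:
  fixes a :: "'a::euclidean_space \<times> real"
  assumes "a \<in> Ln"
  shows "tball a e \<subseteq> Xn"
  using assms ball_shift_pos[of _ a e] by (auto simp: tball_def Xn_def Pn_def Ln_def)

lemma ball_Pn:
  fixes p :: "'a::euclidean_space \<times> real"
  assumes "e \<le> snd p"
  shows "ball p e \<subseteq> Pn"
proof
  fix x assume "x \<in> ball p e"
  moreover have "dist (snd p) (snd x) \<le> dist p x" by (metis dist_snd_le)
  ultimately show "x \<in> Pn" using assms by (auto simp: Pn_def dist_real_def)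
qed

lemma istopology_tauP: "istopology (tauP A)"
  unfolding istopology_def
proof (intro conjI allI impI)
  fix S T assume S: "tauP A S" and T: "tauP A T"
  show "tauP A (S \<inter> T)"
    unfolding tauP_def
  proof (intro conjI ballI impI)
    show "S \<inter> T \<subseteq> Xn" using S by (auto simp: tauP_def)
  next
    fix p assume p: "p \<in> S \<inter> T" "p \<in> Pn"
    obtain e1 where e1: "0 < e1" "e1 < snd p" "ball p e1 \<subseteq> S" using S p unfolding tauP_def by blast
    obtain e2 where e2: "0 < e2" "e2 < snd p" "ball p e2 \<subseteq> T" using T p unfolding tauP_def by blast
    show "\<exists>e. 0 < e \<and> e < snd p \<and> ball p e \<subseteq> S \<inter> T"
      by (rule exI[of _ "min e1 e2"]) (use e1 e2 in auto)
  next
    fix p assume p: "p \<in> S \<inter> T" "p \<in> A"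
    obtain e1 where e1: "0 < e1" "ball p e1 \<inter> Xn \<subseteq> S" using S p unfolding tauP_def by blast
    obtain e2 where e2: "0 < e2" "ball p e2 \<inter> Xn \<subseteq> T" using T p unfolding tauP_def by blast
    show "\<exists>e>0. ball p e \<inter> Xn \<subseteq> S \<inter> T"
      by (rule exI[of _ "min e1 e2"]) (use e1 e2 in auto)
  next
    fix p assume p: "p \<in> S \<inter> T" "p \<in> Ln - A"
    obtain e1 where e1: "0 < e1" "tball p e1 \<subseteq> S" using S p unfolding tauP_def by blast
    obtain e2 where e2: "0 < e2" "tball p e2 \<subseteq> T" using T p unfolding tauP_def by blast
    have h1: "tball p (min e1 e2) \<subseteq> tball p e1"
      by (rule tball_mono) (use e1 e2 in auto)
    have "tball p (min e1 e2) \<subseteq> tball p e2"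
      by (rule tball_mono) (use e1 e2 in auto)
    then show "\<exists>e>0. tball p e \<subseteq> S \<inter> T"
      using h1 e1 e2 by (intro exI[of _ "min e1 e2"]) auto
  qed
next
  fix K assume K: "\<forall>S\<in>K. tauP A S"
  show "tauP A (\<Union>K)"
    unfolding tauP_def
  proof (intro conjI ballI impI)
    show "\<Union>K \<subseteq> Xn" using K by (auto simp: tauP_def)
  next
    fix p assume p: "p \<in> \<Union>K" "p \<in> Pn"
    then obtain S where S: "S \<in> K" "p \<in> S" by auto
    then have "tauP A S" using K by blast
    then have "\<exists>e. 0 < e \<and> e < snd p \<and> ball p e \<subseteq> S" using S(2) p(2) unfolding tauP_def by blast
    then show "\<exists>e. 0 < e \<and> e < snd p \<and> ball p e \<subseteq> \<Union>K" using S(1) by blast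
  next
    fix p assume p: "p \<in> \<Union>K" "p \<in> A"
    then obtain S where S: "S \<in> K" "p \<in> S" by auto
    then have "tauP A S" using K by blast
    then have "\<exists>e>0. ball p e \<inter> Xn \<subseteq> S" using S(2) p(2) unfolding tauP_def by blast
    then show "\<exists>e>0. ball p e \<inter> Xn \<subseteq> \<Union>K" using S(1) by blast
  next
    fix p assume p: "p \<in> \<Union>K" "p \<in> Ln - A"
    then obtain S where S: "S \<in> K" "p \<in> S" by auto
    then have "tauP A S" using K by blast
    then have "\<exists>e>0. tball p e \<subseteq> S" using S(2) p(2) unfolding tauP_def by blast
    then show "\<exists>e>0. tball p e \<subseteq> \<Union>K" using S(1) by blast
  qed
qed

lemma openin_tau: "openin (tau A) U \<longleftrightarrow> tauP A U"
  using istopology_tauP[of A] unfolding tau_def tauP_def[symmetric]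
  by (simp add: topology_inverse')

lemma tauP_Xn:
  fixes A :: "('a::euclidean_space \<times> real) set"
  shows "tauP A Xn"
  unfolding tauP_def
proof (intro conjI ballI impI)
  fix p :: "'a \<times> real" assume p: "p \<in> Pn"
  then have "snd p > 0" by (simp add: Pn_def)
  then show "\<exists>e. 0 < e \<and> e < snd p \<and> ball p e \<subseteq> Xn"
    using ball_Pn[of "snd p / 2" p]
    by (intro exI[of _ "snd p / 2"]) (auto simp: Xn_def)
next
  fix p :: "'a \<times> real" assume p: "p \<in> Ln - A"
  then show "\<exists>e>0. tball p e \<subseteq> Xn" using tball_sub_Xn[of p 1] zero_less_one by blast
next
  fix p :: "'a \<times> real" assume "p \<in> A"
  show "\<exists>e>0. ball p e \<inter> Xn \<subseteq> Xn" using zero_less_one by blast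
qed simp

lemma topspace_tau: "topspace (tau A) = Xn"
proof
  show "topspace (tau A) \<subseteq> Xn"
    unfolding topspace_def openin_tau tauP_def by auto
  show "Xn \<subseteq> topspace (tau A)"
    using tauP_Xn[of A] openin_subset[of "tau A" Xn] by (simp add: openin_tau)
qed

lemma euclid_open_tau:
  fixes A :: "('a::euclidean_space \<times> real) set"
  assumes "openin (top_of_set Xn) V"
  shows "tauP A V"
proof -
  have V: "V \<subseteq> Xn" "\<And>x. x \<in> V \<Longrightarrow> \<exists>e>0. ball x e \<inter> Xn \<subseteq> V"
    using assms unfolding openin_contains_ball by auto
  show ?thesis
    unfolding tauP_def
  proof (intro conjI ballI impI)
    show "V \<subseteq> Xn" by (rule V)
  next
    fix p assume p: "p \<in> V" "p \<in> Pn"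
    then have sp: "snd p > 0" by (simp add: Pn_def)
    obtain e where e: "e > 0" "ball p e \<inter> Xn \<subseteq> V" using V(2)[OF p(1)] by auto
    have "ball p (min e (snd p / 2)) \<subseteq> Pn" by (rule ball_Pn) (use sp in linarith)
    then have "ball p (min e (snd p / 2)) \<subseteq> ball p e \<inter> Xn" by (auto simp: Xn_def)
    then show "\<exists>e'. 0 < e' \<and> e' < snd p \<and> ball p e' \<subseteq> V"
      using e sp by (intro exI[of _ "min e (snd p / 2)"]) auto
  next
    fix p assume p: "p \<in> V" "p \<in> A"
    then show "\<exists>e>0. ball p e \<inter> Xn \<subseteq> V" using V(2) by auto
  next
    fix p assume p: "p \<in> V" "p \<in> Ln - A"
    obtain e where e: "e > 0" "ball p e \<inter> Xn \<subseteq> V" using V(2)[OF p(1)] by auto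
    have "tball p (e/2) \<subseteq> ball p e \<inter> Xn"
      using tball_sub_ball[of "e/2" p] tball_sub_Xn[of p "e/2"] p e by auto
    then show "\<exists>e>0. tball p e \<subseteq> V" using e by (intro exI[of _ "e/2"]) auto
  qed
qed

lemma tau_Ln: "tau (Ln :: ('a::euclidean_space \<times> real) set) = top_of_set Xn"
proof (rule topology_eq[THEN iffD2], intro allI)
  fix U :: "('a \<times> real) set"
  show "openin (tau Ln) U \<longleftrightarrow> openin (top_of_set Xn) U"
  proof
    assume "openin (tau Ln) U"
    then have U: "tauP Ln U" by (simp add: openin_tau)
    show "openin (top_of_set Xn) U"
      unfolding openin_contains_ball
    proof (intro conjI ballI)
      show "U \<subseteq> Xn" using U by (simp add: tauP_def)
    next
      fix x assume x: "x \<in> U"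
      then have "x \<in> Pn \<or> x \<in> Ln" using U by (auto simp: tauP_def Xn_def)
      then show "\<exists>e>0. ball x e \<inter> Xn \<subseteq> U"
      proof
        assume "x \<in> Pn"
        then obtain e where "0 < e" "ball x e \<subseteq> U" using U x unfolding tauP_def by blast
        then show ?thesis by blast
      next
        assume "x \<in> Ln"
        then show ?thesis using U x unfolding tauP_def by blast
      qed
    qed
  next
    assume "openin (top_of_set Xn) U"
    then show "openin (tau Ln) U" by (simp add: openin_tau euclid_open_tau)
  qed
qed

lemma closed_Xn: "closed (Xn :: ('a::euclidean_space \<times> real) set)"
proof -
  have "Xn = (snd -` {0..} :: ('a \<times> real) set)" by (auto simp: Xn_def Pn_def Ln_def)
  moreover have "closed (snd -` {0..} :: ('a \<times> real) set)"
    by (rule closed_vimage_snd) (rule closed_atLeast)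
  ultimately show ?thesis by simp
qed

lemma tball_open:
  fixes a :: "'a::euclidean_space \<times> real"
  assumes "a \<in> Ln - A" "0 < r" "A \<subseteq> Ln"
  shows "tauP A (tball a r)"
  unfolding tauP_def
proof (intro conjI ballI impI)
  show "tball a r \<subseteq> Xn" using assms tball_sub_Xn by blast
next
  fix p assume p: "p \<in> tball a r" "p \<in> Pn"
  have "p \<noteq> a" using p assms by (auto simp: Pn_def Ln_def)
  then have pb: "dist (shift_pt a r) p < r" using p by (auto simp: tball_def)
  have sp: "snd p > 0" using p by (simp add: Pn_def)
  define e where "e = min (r - dist (shift_pt a r) p) (snd p / 2)"
  have "ball p e \<subseteq> ball (shift_pt a r) r"
  proof
    fix x assume "x \<in> ball p e"
    then have "dist p x < r - dist (shift_pt a r) p" by (simp add: e_def)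
    then show "x \<in> ball (shift_pt a r) r"
      using dist_triangle[of "shift_pt a r" x p] by simp
  qed
  then have "ball p e \<subseteq> tball a r" by (auto simp: tball_def)
  moreover have "0 < e" "e < snd p" using pb sp by (auto simp: e_def)
  ultimately show "\<exists>e. 0 < e \<and> e < snd p \<and> ball p e \<subseteq> tball a r" by blast
next
  fix p assume p: "p \<in> tball a r" "p \<in> A"
  then have "snd p = 0" using assms by (auto simp: Ln_def)
  then have "p = a" using p ball_shift_pos[of p a r] by (auto simp: tball_def)
  then show "\<exists>e>0. ball p e \<inter> Xn \<subseteq> tball a r" using p assms by auto
next
  fix p assume p: "p \<in> tball a r" "p \<in> Ln - A"
  then have "snd p = 0" by (auto simp: Ln_def)
  then have "p = a" using p ball_shift_pos[of p a r] by (auto simp: tball_def)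
  then show "\<exists>e>0. tball p e \<subseteq> tball a r" using assms by blast
qed

lemma num1:
  fixes t e :: real
  assumes "0 < t" "t < e"
  shows "sqrt (t\<^sup>2 + (e - t\<^sup>2 / e)\<^sup>2) < e"
proof -
  define s where "s = t\<^sup>2 / e"
  have e: "e > 0" using assms by simp
  have ts: "t\<^sup>2 = s * e" using e by (simp add: s_def)
  have "t\<^sup>2 < e\<^sup>2" using assms by (simp add: power_strict_mono)
  then have s: "0 < s" "s < e" using e assms by (auto simp: s_def field_simps power2_eq_square)
  have "t\<^sup>2 + (e - s)\<^sup>2 = e\<^sup>2 - s * (e - s)" using ts by (simp add: power2_eq_square algebra_simps)
  also have "\<dots> < e\<^sup>2" using s by simp
  finally have "t\<^sup>2 + (e - t\<^sup>2 / e)\<^sup>2 < e\<^sup>2" by (simp add: s_def)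
  then show ?thesis using e by (metis abs_of_pos real_sqrt_abs real_sqrt_less_mono)
qed

lemma num2:
  fixes t e :: real
  assumes "0 < t" "0 < e"
  shows "\<not> sqrt (t\<^sup>2 + (e/2 - t\<^sup>2 / e)\<^sup>2) < e/2"
proof -
  define s where "s = t\<^sup>2 / e"
  have ts: "t\<^sup>2 = s * e" using assms by (simp add: s_def)
  have "0 \<le> s" using assms by (simp add: s_def)
  have "t\<^sup>2 + (e/2 - s)\<^sup>2 = (e/2)\<^sup>2 + s\<^sup>2" using ts by (simp add: power2_eq_square algebra_simps)
  then have "(e/2)\<^sup>2 \<le> t\<^sup>2 + (e/2 - t\<^sup>2 / e)\<^sup>2" by (simp add: s_def)
  then have "sqrt ((e/2)\<^sup>2) \<le> sqrt (t\<^sup>2 + (e/2 - t\<^sup>2 / e)\<^sup>2)" by (rule real_sqrt_le_mono)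
  then show ?thesis using assms by simp
qed

lemma num3:
  fixes t e d :: real
  assumes "0 < t" "0 < e" "t \<le> e/2" "t \<le> d/2"
  shows "sqrt (t\<^sup>2 + (t\<^sup>2 / e)\<^sup>2) \<le> d"
proof -
  have "t\<^sup>2 / e \<le> t" using assms by (simp add: power2_eq_square field_simps)
  moreover have "0 \<le> t\<^sup>2 / e" using assms by simp
  ultimately have "(t\<^sup>2 / e)\<^sup>2 \<le> t\<^sup>2" by (simp add: power_mono)
  moreover have "(2*t)\<^sup>2 = 4*t\<^sup>2" by (simp add: power2_eq_square)
  moreover have "0 \<le> t\<^sup>2" by simp
  ultimately have "t\<^sup>2 + (t\<^sup>2 / e)\<^sup>2 \<le> (2*t)\<^sup>2" by linarith
  then have "sqrt (t\<^sup>2 + (t\<^sup>2 / e)\<^sup>2) \<le> sqrt ((2*t)\<^sup>2)" by (rule real_sqrt_le_mono)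
  moreover have "sqrt ((2*t)\<^sup>2) = 2*t" using assms(1) by (simp only: real_sqrt_abs)
  ultimately show ?thesis using assms(4) by linarith
qed

theorem mainTheorem3:
  fixes A :: "('a::euclidean_space \<times> real) set"
  assumes "A \<subseteq> Ln"
  shows "locally_compact_space (tau A) \<longleftrightarrow> A = Ln"
proof
  assume "A = Ln"
  then have "tau A = top_of_set Xn" by (simp add: tau_Ln)
  moreover have "locally_compact_space (top_of_set (Xn :: ('a \<times> real) set))"
    by (rule locally_compact_space_closed_subset[OF locally_compact_space_euclidean])
       (simp add: closed_Xn)
  ultimately show "locally_compact_space (tau A)" by simp
next
  assume lc: "locally_compact_space (tau A)"
  show "A = Ln"
  proof (rule ccontr)
    assume "A \<noteq> Ln"
    then obtain a where a: "a \<in> Ln - A" using assms by blast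
    then have aX: "a \<in> topspace (tau A)" by (simp add: topspace_tau Xn_def)
    have "\<exists>U K. openin (tau A) U \<and> compactin (tau A) K \<and> a \<in> U \<and> U \<subseteq> K"
      using lc aX unfolding locally_compact_space_def by (rule bspec)
    then obtain U K where UK: "openin (tau A) U" "compactin (tau A) K" "a \<in> U" "U \<subseteq> K"
      by blast
    have "tauP A U" using UK(1) by (simp add: openin_tau)
    then have "\<forall>p\<in>U. p \<in> Ln - A \<longrightarrow> (\<exists>e>0. tball p e \<subseteq> U)"
      unfolding tauP_def by simp
    then have "\<exists>e>0. tball a e \<subseteq> U" using UK(3) a by blast
    then obtain e where e: "e > 0" "tball a e \<subseteq> U" by blast
    define U0 where "U0 = tball a (e/2)"
    define W where "W = (\<lambda>d. Xn \<inter> - cball a d)"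
    have U0o: "openin (tau A) U0" unfolding U0_def openin_tau
      by (rule tball_open) (use a e assms in auto)
    have Wo: "openin (tau A) (W d)" for d
      unfolding openin_tau W_def
      by (rule euclid_open_tau, rule openin_open_Int) (intro open_Compl closed_cball)
    have Wm: "W d \<subseteq> W d'" if "d' \<le> d" for d d'
      using that by (auto simp: W_def)
    define \<U> where "\<U> = insert U0 (W ` {0<..})"
    have KX: "K \<subseteq> Xn" using UK(2) by (simp add: compactin_def topspace_tau)
    have "K \<subseteq> \<Union>\<U>"
    proof
      fix x assume "x \<in> K"
      show "x \<in> \<Union>\<U>"
      proof (cases "x = a")
        case True
        then show ?thesis by (simp add: \<U>_def U0_def tball_def)
      next
        case False
        then have pos: "dist a x > 0" by simp
        have "x \<in> Xn" using \<open>x \<in> K\<close> KX by blast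
        moreover have "x \<notin> cball a (dist a x / 2)" using pos by simp
        ultimately have xin: "x \<in> W (dist a x / 2)" unfolding W_def by blast
        have "dist a x / 2 \<in> {0<..}" using pos by simp
        then have "W (dist a x / 2) \<in> \<U>" unfolding \<U>_def by blast
        then show ?thesis using xin by blast
      qed
    qed
    moreover have "\<And>B. B \<in> \<U> \<Longrightarrow> openin (tau A) B" using U0o Wo unfolding \<U>_def by blast
    ultimately have "\<exists>F. finite F \<and> F \<subseteq> \<U> \<and> K \<subseteq> \<Union>F"
      by (rule compactinD[OF UK(2), rotated])
    then obtain F where F: "finite F" "F \<subseteq> \<U>" "K \<subseteq> \<Union>F" by blast
    have fin: "G \<subseteq> \<U> \<Longrightarrow> \<exists>d>0. \<Union>G \<subseteq> U0 \<union> W d" if "finite G" for G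
      using that
    proof (induction G rule: finite_induct)
      case empty
      have "\<Union>{} \<subseteq> U0 \<union> W 1" by simp
      then show ?case using zero_less_one by blast
    next
      case (insert B G)
      have "G \<subseteq> \<U>" using insert.prems by simp
      then obtain d where d: "d > 0" "\<Union>G \<subseteq> U0 \<union> W d" using insert.IH by blast
      have "B \<in> \<U>" using insert.prems by simp
      then have "B = U0 \<or> (\<exists>d'>0. B = W d')" unfolding \<U>_def by blast
      then show ?case
      proof
        assume "B = U0"
        then have "\<Union>(insert B G) = U0 \<union> \<Union>G" by simp
        then have "\<Union>(insert B G) \<subseteq> U0 \<union> W d" using d(2) by blast
        then show ?case using d(1) by blast
      next
        assume "\<exists>d'>0. B = W d'"
        then obtain d' where d': "d' > 0" "B = W d'" by blast
        have w1: "W d \<subseteq> W (min d d')" by (rule Wm) simp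
        have w2: "W d' \<subseteq> W (min d d')" by (rule Wm) simp
        from d'(2) have "\<Union>(insert B G) = W d' \<union> \<Union>G" by simp
        then have "\<Union>(insert B G) \<subseteq> U0 \<union> W (min d d')"
          using w1 w2 d(2) by blast
        moreover have "min d d' > 0" using d(1) d'(1) by simp
        ultimately show ?case by blast
      qed
    qed
    obtain d where d: "d > 0" "\<Union>F \<subseteq> U0 \<union> W d"
      using fin[OF F(1,2)] by blast
    obtain u :: 'a where u: "u \<in> Basis" using nonempty_Basis by blast
    define t where "t = min (e/2) (d/2)"
    have t: "0 < t" "t < e" "t \<le> e/2" "t \<le> d/2" using e d by (auto simp: t_def)
    obtain a1 where a1: "a = (a1, 0)" using a by (cases a) (auto simp: Ln_def)
    define y where "y = (a1 + t *\<^sub>R u, t\<^sup>2 / e)"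
    have nu: "dist a1 (a1 + t *\<^sub>R u) = t" using u t by (simp add: dist_norm)
    have "y \<in> tball a e"
      using num1[OF t(1,2)] nu by (simp add: tball_def a1 y_def shift_pt_def dist_Pair_Pair dist_real_def)
    then have "y \<in> K" using e(2) UK(4) by blast
    then have "y \<in> \<Union>F" using F(3) by blast
    then have "y \<in> U0 \<union> W d" using d(2) by blast
    moreover have "y \<notin> U0"
      using num2[OF t(1) e(1)] nu t by (simp add: U0_def tball_def a1 y_def shift_pt_def dist_Pair_Pair dist_real_def)
    moreover have "y \<notin> W d"
      using num3[OF t(1) e(1) t(3,4)] nu e(1) by (simp add: W_def a1 y_def dist_Pair_Pair dist_real_def)
    ultimately show False by blast
  qed
qed

end
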